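(* Fix real numbers $a$, $b>0$, $c>0$, and let $P(x,y)=\tfrac12+(x-y)\bigl(c-b(x+y)+axy\bigr)$. Let $\mathcal D=\{(x,y)\in\mathbb R_+^2: 0<P(x,y)<1\}$. Then $\mathcal D$ is a non-convex set that contains the diagonal $\{(x,x):x\ge 0\}$, is symmetric with respect to the reflection $(x,y)\mapsto(y,x)$, is unbounded along the diagonal, and is bounded along every non-diagonal ray in $\mathbb R_+^2$, i.e. for every $(u,v)\in\mathbb R_+^2$ with $u\neq v$, the set $\{r\ge 0: (ru,rv)\in\mathcal D\}$ is bounded.
   Context: $\mathbb R_+=[0,\infty)$. *)

theory Defs
  imports "HOL-Analysis.Analysis"
begin

definition Ppoly :: "real \<Rightarrow> real \<Rightarrow> real \<Rightarrow> real \<Rightarrow> real \<Rightarrow> real" where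
  "Ppoly a b c x y = 1/2 + (x - y) * (c - b * (x + y) + a * x * y)"

definition Dset :: "real \<Rightarrow> real \<Rightarrow> real \<Rightarrow> (real \<times> real) set" where
  "Dset a b c = {(x, y). 0 \<le> x \<and> 0 \<le> y \<and> 0 < Ppoly a b c x y \<and> Ppoly a b c x y < 1}"

end

theory Submission
  imports Defs
begin

lemma ray_bound:
  fixes a b c u v :: real
  assumes b: "b > 0" and c: "c > 0" and u: "u \<ge> 0" and v: "v \<ge> 0" and uv: "u \<noteq> v"
  shows "bounded {r::real. r \<ge> 0 \<and> (r * u, r * v) \<in> Dset a b c}"
proof -
  define d where "d = u - v"
  define s where "s = u + v"
  define e where "e = a * u * v"
  have d: "\<bar>d\<bar> > 0" using uv by (simp add: d_def)
  have s: "s > 0" using u v uv by (simp add: s_def)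
  have bs: "b * s > 0" using b s by simp
  define R where "R = 1/(2*abs d) + (c+1)/(b * s) + 1 + (b * s+1)/abs e"
  have key: "r \<le> R" if r: "r \<ge> 0" and mem: "(r * u, r * v) \<in> Dset a b c" for r
  proof (rule ccontr)
    assume "\<not> r \<le> R"
    hence rR: "r > R" by simp
    have R1: "r > 1/(2*\<bar>d\<bar>)" "r > (c+1)/(b * s)" "r > 1" "r > (b * s+1)/\<bar>e\<bar>"
    proof -
      have "1/(2*abs d) \<ge> 0" "(c+1)/(b * s) \<ge> 0" "(b * s+1)/abs e \<ge> 0" using d bs c by auto
      thus "r > 1/(2*\<bar>d\<bar>)" "r > (c+1)/(b * s)" "r > 1" "r > (b * s+1)/\<bar>e\<bar>"
        using rR unfolding R_def by linarith+
    qed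
    define q where "q = c - b * s*r + e*r^2"
    have eq: "Ppoly a b c (r * u) (r * v) - 1/2 = r * d * q"
      unfolding Ppoly_def q_def d_def s_def e_def by (simp add: algebra_simps power2_eq_square)
    have lt: "\<bar>r * d * q\<bar> < 1/2" using mem eq unfolding Dset_def by auto
    have q1: "\<bar>q\<bar> \<ge> 1"
    proof (cases "e > 0")
      case True
      have "(b * s+1)/e < r" using R1(4) True by simp
      hence "b * s+1 < r*e" using True by (simp add: divide_less_eq mult.commute)
      hence "(b * s+1)*r \<le> r*e*r" using R1(3) by (intro mult_right_mono) auto
      hence "b * s * r + r \<le> e * r^2" by (simp add: power2_eq_square algebra_simps)
      hence "e*r^2 \<ge> b * s*r + 1" using R1(3) by linarith
      thus ?thesis unfolding q_def using c by simp
    next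
      case False
      have "e*r^2 \<le> 0" using False by (simp add: mult_nonpos_nonneg)
      have "(c+1) < r*(b * s)" using R1(2) bs by (simp add: divide_less_eq)
      thus ?thesis unfolding q_def using \<open>e*r^2 \<le> 0\<close> by (simp add: algebra_simps)
    qed
    have "1/2 < r * \<bar>d\<bar>" using R1(1) d by (simp add: divide_less_eq mult.commute)
    also have "\<dots> \<le> r * \<bar>d\<bar> * \<bar>q\<bar>" using q1 r d
      by (metis mult.right_neutral mult_left_mono abs_ge_zero zero_le_mult_iff)
    also have "\<dots> = \<bar>r * d * q\<bar>" using r by (simp add: abs_mult)
    finally show False using lt by simp
  qed
  have "{r::real. r \<ge> 0 \<and> (r * u, r * v) \<in> Dset a b c} \<subseteq> cball 0 R"
    using key by (auto simp: dist_real_def)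
  thus ?thesis using bounded_cball bounded_subset by blast
qed

lemma nonconvex:
  fixes a b c :: real
  assumes b: "b > 0" and c: "c > 0"
  shows "\<not> convex (Dset a b c)"
proof
  assume cv: "convex (Dset a b c)"
  define m where "m = (if a \<le> 0 then c/(2*b) + 1/c else 1 + 4*(b+b/c)/a)"
  have m0: "m \<ge> 0" unfolding m_def using b c by auto
  have p: "(c/b, 0) \<in> Dset a b c" using b c unfolding Dset_def Ppoly_def by simp
  have q: "(m, m) \<in> Dset a b c" using m0 unfolding Dset_def Ppoly_def by simp
  have "(1/2::real) *\<^sub>R (c/b, 0) + (1/2::real) *\<^sub>R (m, m) \<in> Dset a b c"
    using convexD[OF cv p q, of "1/2" "1/2"] by simp
  hence mem: "((c/b+m)/2, m/2) \<in> Dset a b c" by (simp add: field_simps)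
  define h where "h = c/2 - b*m + a*m*(c/b+m)/4"
  have eq: "Ppoly a b c ((c/b+m)/2) (m/2) = 1/2 + (c/(2*b)) * h"
    unfolding Ppoly_def h_def using b by (simp add: field_simps)
  show False
  proof (cases "a \<le> 0")
    case True
    have "a*m*(c/b+m)/4 \<le> 0" using True m0 b c
      by (simp add: mult_nonpos_nonneg divide_nonpos_pos)
    moreover have "c/2 - b*m = - b/c" unfolding m_def using True b c by (simp add: field_simps)
    ultimately have "h \<le> -b/c" unfolding h_def by simp
    hence "(c/(2*b)) * h \<le> (c/(2*b)) * (-b/c)" using b c by (intro mult_left_mono) auto
    also have "\<dots> = -1/2" using b c by simp
    finally show False using mem eq unfolding Dset_def by auto
  next
    case False
    hence a: "a > 0" by simp
    have m1: "m \<ge> 1" "m \<ge> 4*(b+b/c)/a" unfolding m_def using False a b c by auto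
    have "4*(b+b/c) \<le> a*m" using m1(2) a by (simp add: divide_le_eq mult.commute)
    hence A: "4*(b+b/c)*m \<le> a*m*m" using m1(1) by (intro mult_right_mono) auto
    have B: "b/c \<le> b/c*m" using m1(1) b c mult_left_mono[of 1 m "b/c"] by simp
    have C: "4*(b+b/c)*m = 4*(b*m) + 4*(b/c*m)" by (simp add: algebra_simps)
    have "a*m*m/4 \<ge> b*m + b/c" using A B C by linarith
    moreover have "a*m*(c/b)/4 \<ge> 0" using a m0 b c by simp
    moreover have "h = c/2 - b*m + a*m*m/4 + a*m*(c/b)/4" unfolding h_def by (simp add: algebra_simps)
    ultimately have "h \<ge> b/c" using c by linarith
    hence "(c/(2*b)) * h \<ge> (c/(2*b)) * (b/c)" using b c by (intro mult_left_mono) auto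
    moreover have "(c/(2*b)) * (b/c) = 1/2" using b c by simp
    moreover have "Ppoly a b c ((c/b+m)/2) (m/2) < 1" using mem unfolding Dset_def by auto
    ultimately show False using eq by linarith
  qed
qed

theorem mainTheorem2:
  fixes a b c :: real
  assumes "b > 0" and "c > 0"
  shows "\<not> convex (Dset a b c) \<and>
         {(x, x) | x. x \<ge> 0} \<subseteq> Dset a b c \<and>
         (\<forall>x y. (x, y) \<in> Dset a b c \<longleftrightarrow> (y, x) \<in> Dset a b c) \<and>
         \<not> bounded {r::real. r \<ge> 0 \<and> (r, r) \<in> Dset a b c} \<and>
         (\<forall>u v. u \<ge> 0 \<and> v \<ge> 0 \<and> u \<noteq> v \<longrightarrow>
           bounded {r::real. r \<ge> 0 \<and> (r * u, r * v) \<in> Dset a b c})"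
proof (intro conjI allI impI)
  show "\<not> convex (Dset a b c)" using nonconvex assms by blast
  show "{(x, x) | x. x \<ge> 0} \<subseteq> Dset a b c" unfolding Dset_def Ppoly_def by auto
  fix x y
  have "Ppoly a b c y x = 1 - Ppoly a b c x y" unfolding Ppoly_def by (simp add: algebra_simps)
  thus "(x, y) \<in> Dset a b c \<longleftrightarrow> (y, x) \<in> Dset a b c" unfolding Dset_def by auto
next
  have E: "{r::real. r \<ge> 0 \<and> (r, r) \<in> Dset a b c} = {0..}" unfolding Dset_def Ppoly_def by auto
  show "\<not> bounded {r::real. r \<ge> 0 \<and> (r, r) \<in> Dset a b c}"
  proof
    assume "bounded {r::real. r \<ge> 0 \<and> (r, r) \<in> Dset a b c}"
    then obtain B where "\<forall>x\<in>{0::real..}. \<bar>x\<bar> \<le> B" using E bounded_real by metis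
    hence "\<bar>B\<bar>+1 \<le> B" by (metis abs_ge_zero abs_of_nonneg add_nonneg_nonneg atLeast_iff zero_le_one)
    thus False by simp
  qed
next
  fix u v :: real
  assume "u \<ge> 0 \<and> v \<ge> 0 \<and> u \<noteq> v"
  thus "bounded {r::real. r \<ge> 0 \<and> (r * u, r * v) \<in> Dset a b c}" using ray_bound assms by blast
qed

end
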